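(* Let $n\ge 4$, $Q=\{0,1,\dots,n-1\}$, and let $\mathcal{W}_n=(Q,\{a,b,c,d,e\},\delta,0,\{1\})$ be the DFA whose letters induce the following transformations of $Q$: $a$: $0\mapsto n-1$, $i\mapsto i+1$ for $1\le i\le n-3$, $n-2\mapsto 1$, $n-1\mapsto n-1$; $b$: $0\mapsto n-1$, $1\mapsto 2$, $2\mapsto 1$, all other states fixed; $c$: $0\mapsto n-1$, $n-2\mapsto 1$, all other states fixed; $d$: $0\mapsto n-1$, $1\mapsto n-1$, all other states fixed; $e$: $0\mapsto 1$, every state $q\neq 0$ mapped to $n-1$. Then $\mathcal{W}_n$ is minimal, the language it accepts is suffix-free, and its transition semigroup equals $\mathbf{W}_{\mathrm{sf}}(n)$, which has cardinality $(n-1)^{n-2}+n-2$. In particular, $\mathbf{W}_{\mathrm{sf}}(n)$ contains (a) all $(n-1)^{n-2}$ transformations of $Q$ that send $0$ and $n-1$ to $n-1$ and map $\{1,\dots,n-2\}$ into $Q\setminus\{0\}$, and (b) all $n-2$ transformations that send $0$ to a state in $\{1,\dots,n-2\}$ and map all other states to $n-1$.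
   Context: Transformations act on the right: $qt$ is the image of $q$ under $t$, and $st$ denotes applying $s$ first, then $t$. The transition semigroup of a DFA is the semigroup of transformations of its state set generated by the transformations induced by its letters. A language $L$ is suffix-free if whenever $w\in L$ and $u\in L$ with $u$ a suffix of $w$, then $u=w$. Define $\mathbf{B}_{\mathrm{sf}}(n)=\{t:Q\to Q \mid 0\notin Qt,\ (n-1)t=n-1,\ \text{and for all } j\ge1:\ 0t^j=n-1 \text{ or } 0t^j\neq qt^j \text{ for all } q \text{ with } 0<q<n-1\}$, and $\mathbf{W}_{\mathrm{sf}}(n)=\{t\in\mathbf{B}_{\mathrm{sf}}(n)\mid 0t=n-1 \text{ or } qt=n-1 \text{ for all } q \text{ with } 1\le q\le n-2\}$. *)

theory Defs
  imports "HOL-Library.FuncSet"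
begin

datatype letter = La | Lb | Lc | Ld | Le

definition trQ :: "nat \<Rightarrow> (nat \<Rightarrow> nat) set" where
  "trQ n = {..<n} \<rightarrow>\<^sub>E {..<n}"

text \<open>Composition acting on the right: st = apply s first, then t.\<close>
definition tcomp :: "nat \<Rightarrow> (nat \<Rightarrow> nat) \<Rightarrow> (nat \<Rightarrow> nat) \<Rightarrow> (nat \<Rightarrow> nat)" where
  "tcomp n s t = restrict (\<lambda>q. t (s q)) {..<n}"

inductive_set gen_semigroup :: "nat \<Rightarrow> (nat \<Rightarrow> nat) set \<Rightarrow> (nat \<Rightarrow> nat) set"
  for n G where
  gen: "t \<in> G \<Longrightarrow> t \<in> gen_semigroup n G"
| comp: "s \<in> gen_semigroup n G \<Longrightarrow> t \<in> gen_semigroup n G \<Longrightarrow> tcomp n s t \<in> gen_semigroup n G"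

definition lang_of :: "(nat \<Rightarrow> letter \<Rightarrow> nat) \<Rightarrow> nat \<Rightarrow> nat set \<Rightarrow> letter list set" where
  "lang_of \<delta> q0 F = {w. foldl \<delta> q0 w \<in> F}"

definition is_dfa :: "nat set \<Rightarrow> (nat \<Rightarrow> letter \<Rightarrow> nat) \<Rightarrow> nat \<Rightarrow> nat set \<Rightarrow> bool" where
  "is_dfa S \<delta> q0 F \<longleftrightarrow> finite S \<and> q0 \<in> S \<and> F \<subseteq> S \<and> (\<forall>q\<in>S. \<forall>x. \<delta> q x \<in> S)"

definition minimal_dfa :: "nat set \<Rightarrow> (nat \<Rightarrow> letter \<Rightarrow> nat) \<Rightarrow> nat \<Rightarrow> nat set \<Rightarrow> bool" where
  "minimal_dfa S \<delta> q0 F \<longleftrightarrow> is_dfa S \<delta> q0 F \<and>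
     (\<forall>S' \<delta>' q0' F'. is_dfa S' \<delta>' q0' F' \<and> lang_of \<delta>' q0' F' = lang_of \<delta> q0 F
        \<longrightarrow> card S \<le> card S')"

definition suffix_free :: "'a list set \<Rightarrow> bool" where
  "suffix_free L \<longleftrightarrow> (\<forall>w\<in>L. \<forall>u\<in>L. (\<exists>v. w = v @ u) \<longrightarrow> u = w)"

definition B_sf :: "nat \<Rightarrow> (nat \<Rightarrow> nat) set" where
  "B_sf n = {t \<in> trQ n. 0 \<notin> t ` {..<n} \<and> t (n-1) = n-1 \<and>
     (\<forall>j\<ge>1. (t ^^ j) 0 = n-1 \<or> (\<forall>q. 0 < q \<and> q < n-1 \<longrightarrow> (t ^^ j) 0 \<noteq> (t ^^ j) q))}"

definition W_sf :: "nat \<Rightarrow> (nat \<Rightarrow> nat) set" where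
  "W_sf n = {t \<in> B_sf n. t 0 = n-1 \<or> (\<forall>q. 1 \<le> q \<and> q \<le> n-2 \<longrightarrow> t q = n-1)}"

definition W_letter :: "nat \<Rightarrow> letter \<Rightarrow> nat \<Rightarrow> nat" where
  "W_letter n x = restrict (case x of
      La \<Rightarrow> (\<lambda>q. if q = 0 then n-1 else if 1 \<le> q \<and> q \<le> n-3 then q+1
                 else if q = n-2 then 1 else q)
    | Lb \<Rightarrow> (\<lambda>q. if q = 0 then n-1 else if q = 1 then 2 else if q = 2 then 1 else q)
    | Lc \<Rightarrow> (\<lambda>q. if q = 0 then n-1 else if q = n-2 then 1 else q)
    | Ld \<Rightarrow> (\<lambda>q. if q = 0 then n-1 else if q = 1 then n-1 else q)
    | Le \<Rightarrow> (\<lambda>q. if q = 0 then 1 else n-1)) {..<n}"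

definition W_delta :: "nat \<Rightarrow> nat \<Rightarrow> letter \<Rightarrow> nat" where
  "W_delta n q x = W_letter n x q"

end

theory Submission imports Defs begin

definition rot :: "nat \<Rightarrow> nat \<Rightarrow> nat \<Rightarrow> nat" where
 "rot n k = restrict (\<lambda>x. if x = 0 then n-1 else if 1 \<le> x \<and> x \<le> n-2 then (x-1+k) mod (n-2) + 1 else x) {..<n}"
definition sw :: "nat \<Rightarrow> nat \<Rightarrow> nat \<Rightarrow> nat" where
 "sw u v x = (if x = u then v else if x = v then u else x)"
definition swp :: "nat \<Rightarrow> nat \<Rightarrow> nat \<Rightarrow> nat \<Rightarrow> nat" where
 "swp n u v = restrict (\<lambda>x. if x=0 then n-1 else sw u v x) {..<n}"
definition elem :: "nat \<Rightarrow> nat \<Rightarrow> nat \<Rightarrow> nat \<Rightarrow> nat" where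
 "elem n q r = restrict (\<lambda>x. if x=0 then n-1 else if x = q then r else x) {..<n}"
definition Aset :: "nat \<Rightarrow> (nat \<Rightarrow> nat) set" where
 "Aset n = {t \<in> trQ n. t 0 = n-1 \<and> t (n-1) = n-1 \<and> (\<forall>q. 1 \<le> q \<and> q \<le> n-2 \<longrightarrow> t q \<noteq> 0)}"
definition Bset :: "nat \<Rightarrow> (nat \<Rightarrow> nat) set" where
 "Bset n = {t \<in> trQ n. 1 \<le> t 0 \<and> t 0 \<le> n-2 \<and> (\<forall>q. 1 \<le> q \<and> q \<le> n-1 \<longrightarrow> t q = n-1)}"

lemma tcomp_apply: "tcomp n s t x = (if x < n then t (s x) else undefined)"
  by (simp add: tcomp_def)

context fixes n :: nat assumes n4: "4 \<le> n" begin

lemma aLa: "W_letter n La = rot n 1"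
proof
  fix x show "W_letter n La x = rot n 1 x"
    using n4 by (auto simp: W_letter_def rot_def)
qed

lemma rot_mid: "1 \<le> x \<Longrightarrow> x \<le> n-2 \<Longrightarrow> rot n k x = (x-1+k) mod (n-2) + 1"
proof -
  assume "1 \<le> x" "x \<le> n-2"
  moreover have "x < n" using n4 \<open>x \<le> n-2\<close> by linarith
  ultimately show ?thesis by (simp add: rot_def)
qed

lemma rot0_mid: "1 \<le> x \<Longrightarrow> x \<le> n-2 \<Longrightarrow> rot n 0 x = x"
proof -
  assume x: "1 \<le> x" "x \<le> n-2"
  have "x - 1 < n - 2" using x by arith
  then have "(x - 1) mod (n-2) = x - 1" by simp
  then show ?thesis using rot_mid[OF x, of 0] x by simp
qed

lemma a_mid: "1 \<le> q \<Longrightarrow> q \<le> n-2 \<Longrightarrow> W_letter n La q = (if q = n-2 then 1 else q+1)"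
proof -
  assume q: "1 \<le> q" "q \<le> n-2"
  then have "q < n" using n4 by linarith
  then show ?thesis using q n4 by (auto simp: W_letter_def)
qed

lemma rot_out: "rot n k 0 = n-1" "rot n k (n-1) = n-1"
  using n4 by (auto simp: rot_def)

lemma a_out: "W_letter n La 0 = n-1" "W_letter n La (n-1) = n-1"
  using n4 by (auto simp: W_letter_def)

lemma rot_Suc: "rot n (Suc k) = tcomp n (rot n k) (W_letter n La)"
proof
  fix x
  define m where "m = n - 2"
  have m: "n = Suc (Suc m)" "2 \<le> m" using n4 unfolding m_def by arith+
  show "rot n (Suc k) x = tcomp n (rot n k) (W_letter n La) x"
  proof (cases "x < n")
    case False then show ?thesis by (simp add: rot_def tcomp_apply)
  next
    case True
    consider "x = 0" | "x = n-1" | "1 \<le> x \<and> x \<le> n-2" using True by linarith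
    then show ?thesis
    proof cases
      case 1 then show ?thesis using True rot_out a_out by (simp add: tcomp_apply)
    next
      case 2 then show ?thesis using True rot_out a_out by (simp add: tcomp_apply)
    next
      case 3
      define r where "r = (x - 1 + k) mod m"
      have r: "r < m" using m unfolding r_def by simp
      have e1: "rot n k x = r + 1" using rot_mid 3 unfolding r_def m_def by simp
      have "rot n (Suc k) x = Suc (x - 1 + k) mod m + 1" using rot_mid[of x "Suc k"] 3 unfolding m_def by simp
      also have "\<dots> = (if Suc r = m then 0 else Suc r) + 1" unfolding r_def by (simp only: mod_Suc)
      finally have e2: "rot n (Suc k) x = (if Suc r = m then 0 else Suc r) + 1" .
      have e3: "W_letter n La (r+1) = (if r + 1 = m then 1 else r + 2)" using a_mid[of "r+1"] r unfolding m_def by simp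
      show ?thesis using e1 e2 e3 True by (simp add: tcomp_apply)
    qed
  qed
qed

lemma rot_mod: "rot n (k mod (n-2)) = rot n k"
proof
  fix x show "rot n (k mod (n-2)) x = rot n k x"
    unfolding rot_def by (simp only: mod_add_right_eq)
qed

abbreviation "GG \<equiv> gen_semigroup n (range (W_letter n))"

lemma rot_Suc_G: "rot n (Suc k) \<in> GG"
proof (induction k)
  case 0 then show ?case using aLa by (metis One_nat_def gen_semigroup.gen rangeI)
next
  case (Suc k) then show ?case using rot_Suc[of "Suc k"] by (metis gen_semigroup.comp gen_semigroup.gen rangeI)
qed

lemma rot_G: "rot n k \<in> GG"
proof (cases k)
  case 0
  have "rot n 0 = rot n ((n-2) mod (n-2))" by simp
  also have "\<dots> = rot n (Suc (n-3))" using rot_mod[of "n-2"] n4 by (simp add: Suc_diff_Suc numeral_3_eq_3 numeral_2_eq_2)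
  finally show ?thesis using 0 rot_Suc_G by simp
next
  case (Suc k) then show ?thesis using rot_Suc_G by simp
qed


lemma rot_inv: "1 \<le> x \<Longrightarrow> x \<le> n-2 \<Longrightarrow> rot n (n-3) x = (if x = 1 then n-2 else x-1)"
proof -
  assume x: "1 \<le> x" "x \<le> n-2"
  define m where "m = n - 2"
  have m: "n = m + 2" "2 \<le> m" using n4 unfolding m_def by arith+
  have "rot n (n-3) x = (x - 1 + (m - 1)) mod m + 1" using rot_mid[OF x] m by (simp add: numeral_3_eq_3)
  also have "\<dots> = (if x = 1 then n-2 else x-1)"
  proof (cases "x = 1")
    case True then show ?thesis using m by simp
  next
    case False
    then have e: "x - 1 + (m - 1) = (x - 2) + m" using x m by simp
    have "(x - 1 + (m - 1)) mod m = ((x - 2) + m) mod m" by (simp only: e)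
    also have "\<dots> = (x - 2) mod m" by (rule mod_add_self2)
    also have "\<dots> = x - 2" using x m by simp
    finally show ?thesis using False x m by simp
  qed
  finally show ?thesis .
qed

lemma rot_one: "1 \<le> x \<Longrightarrow> x \<le> n-2 \<Longrightarrow> rot n 1 x = (if x = n-2 then 1 else x+1)"
proof -
  assume x: "1 \<le> x" "x \<le> n-2"
  have "Suc (n-3) = n-2" using n4 by arith
  then show ?thesis using rot_mid[OF x, of 1] x by auto
qed

lemma swp_adj_G: "1 \<le> i \<Longrightarrow> i + 1 \<le> n-2 \<Longrightarrow> swp n i (i+1) \<in> GG"
proof (induction i rule: nat_induct_at_least)
  case base
  have "swp n 1 2 = W_letter n Lb"
  proof
    fix x show "swp n 1 2 x = W_letter n Lb x" using n4 by (auto simp: swp_def sw_def W_letter_def)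
  qed
  then show ?case by (metis gen_semigroup.gen rangeI one_add_one)
next
  case (Suc i)
  have eq: "swp n (Suc i) (Suc i + 1) = tcomp n (tcomp n (rot n (n-3)) (swp n i (i+1))) (rot n 1)"
  proof
    fix x
    show "swp n (Suc i) (Suc i + 1) x = tcomp n (tcomp n (rot n (n-3)) (swp n i (i+1))) (rot n 1) x"
    proof (cases "x < n")
      case False then show ?thesis by (simp add: tcomp_apply swp_def)
    next
      case True
      consider "x = 0" | "x = n-1" | "1 \<le> x \<and> x \<le> n-2" using True by linarith
      then show ?thesis
      proof cases
        case 1 then show ?thesis using n4 Suc by (simp add: tcomp_apply swp_def sw_def rot_def)
      next
        case 2
        have a1: "rot n (n-3) (n-1) = n-1" "rot n 1 (n-1) = n-1" using rot_out by auto
        have a2: "swp n i (i+1) (n-1) = n-1" "swp n (Suc i) (Suc i + 1) (n-1) = n-1"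
          using n4 Suc by (auto simp: swp_def sw_def)
        have a3: "n - 1 < n" using n4 by simp
        show ?thesis unfolding 2 tcomp_apply using a1 a2 a3 by presburger
      next
        case 3
        define y where "y = (if x = 1 then n-2 else x-1)"
        have y: "1 \<le> y" "y \<le> n-2" "rot n (n-3) x = y" using 3 rot_inv[of x] n4 unfolding y_def by auto
        define z where "z = sw i (i+1) y"
        have z: "1 \<le> z" "z \<le> n-2" using y Suc unfolding z_def sw_def by auto
        have yn: "y < n" "y \<noteq> 0" using y n4 by auto
        have r: "tcomp n (tcomp n (rot n (n-3)) (swp n i (i+1))) (rot n 1) x = (if z = n-2 then 1 else z+1)"
          using True y(3) yn rot_one[OF z] unfolding z_def by (simp add: tcomp_apply swp_def)
        have l: "swp n (Suc i) (Suc i + 1) x = sw (Suc i) (Suc i + 1) x" using True 3 by (simp add: swp_def)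
        show ?thesis unfolding l r z_def y_def using 3 Suc n4 by (auto simp: sw_def)
      qed
    qed
  qed
  show ?case unfolding eq using Suc rot_G by (metis gen_semigroup.comp Suc_leD add_Suc)
qed

lemma sw_sym: "sw u v = sw v u" by (auto simp: sw_def)

lemma swp_lt_aux: "1 \<le> q \<Longrightarrow> q + Suc d \<le> n-2 \<Longrightarrow> swp n q (q + Suc d) \<in> GG"
proof (induction d)
  case 0 then show ?case using swp_adj_G by simp
next
  case (Suc d)
  define r where "r = q + Suc d"
  have eq: "swp n q (Suc r) = tcomp n (tcomp n (swp n r (r+1)) (swp n q r)) (swp n r (r+1))"
  proof
    fix x show "swp n q (Suc r) x = tcomp n (tcomp n (swp n r (r+1)) (swp n q r)) (swp n r (r+1)) x"
      using Suc.prems n4 unfolding r_def by (auto simp: tcomp_apply swp_def sw_def)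
  qed
  have "swp n r (r+1) \<in> GG" using swp_adj_G Suc.prems unfolding r_def by simp
  moreover have "swp n q r \<in> GG" using Suc unfolding r_def by simp
  ultimately show ?case unfolding r_def[symmetric] using eq r_def by (metis gen_semigroup.comp add_Suc_right)
qed

lemma swp_lt_G: "1 \<le> q \<Longrightarrow> q < r \<Longrightarrow> r \<le> n-2 \<Longrightarrow> swp n q r \<in> GG"
  using swp_lt_aux[of q "r - q - 1"] by simp

lemma swp_id: "swp n q q = rot n 0"
proof
  fix x show "swp n q q x = rot n 0 x"
  proof (cases "1 \<le> x \<and> x \<le> n-2")
    case True
    then have "x < n" using n4 by linarith
    have "x - 1 < n - 2" using True by arith
    then have "(x - 1) mod (n-2) = x - 1" by simp
    then have "rot n 0 x = x" using rot_mid[of x 0] True by simp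
    then show ?thesis using True \<open>x < n\<close> by (simp add: swp_def sw_def)
  qed (auto simp: swp_def sw_def rot_def)
qed

lemma swp_G: "1 \<le> q \<Longrightarrow> q \<le> n-2 \<Longrightarrow> 1 \<le> r \<Longrightarrow> r \<le> n-2 \<Longrightarrow> swp n q r \<in> GG"
proof -
  assume a: "1 \<le> q" "q \<le> n-2" "1 \<le> r" "r \<le> n-2"
  consider "q < r" | "q = r" | "r < q" by linarith
  then show ?thesis
  proof cases
    case 1 then show ?thesis using swp_lt_G a by simp
  next
    case 2 then show ?thesis using swp_id rot_G by simp
  next
    case 3 then show ?thesis using swp_lt_G a sw_sym unfolding swp_def by metis
  qed
qed

lemma elem_conj:
  assumes u: "1 \<le> u" "u \<le> n-2" and v: "1 \<le> v" "v \<le> n-2"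
    and x: "1 \<le> x" "x \<le> n-2" and y: "0 < y" "y < n"
    and G: "elem n x y \<in> GG"
  shows "elem n (sw u v x) (sw u v y) \<in> GG"
proof -
  have eq: "elem n (sw u v x) (sw u v y) = tcomp n (tcomp n (swp n u v) (elem n x y)) (swp n u v)"
  proof
    fix w show "elem n (sw u v x) (sw u v y) w = tcomp n (tcomp n (swp n u v) (elem n x y)) (swp n u v) w"
    proof (cases "w < n")
      case False then show ?thesis by (simp add: tcomp_apply elem_def)
    next
      case wn: True
      have swinv: "\<And>a. sw u v (sw u v a) = a" by (auto simp: sw_def)
      have sweq: "\<And>a b. (sw u v a = b) = (a = sw u v b)" by (auto simp: sw_def)
      have swnz: "\<And>a. a \<noteq> 0 \<Longrightarrow> sw u v a \<noteq> 0" using u v by (auto simp: sw_def)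
      have swlt: "\<And>a. a < n \<Longrightarrow> sw u v a < n" using u v n4 by (auto simp: sw_def)
      have z1: "n - 1 \<noteq> 0" "n - 1 < n" "n - 1 \<noteq> x" "sw u v (n-1) = n-1" using n4 x u v by (auto simp: sw_def)
      show ?thesis
      proof (cases "w = 0")
        case True
        have "swp n u v w = n-1" using True wn by (simp add: swp_def)
        moreover have "elem n x y (n-1) = n-1" using z1 by (simp add: elem_def)
        moreover have "swp n u v (n-1) = n-1" using z1 by (simp add: swp_def)
        moreover have "elem n (sw u v x) (sw u v y) w = n-1" using True wn by (simp add: elem_def)
        ultimately show ?thesis using wn by (simp add: tcomp_apply)
      next
        case False
        define w' where "w' = sw u v w"
        have w': "w' \<noteq> 0" "w' < n" "swp n u v w = w'" using swnz swlt False wn unfolding w'_def by (auto simp: swp_def)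
        define e where "e = (if w' = x then y else w')"
        have e: "elem n x y w' = e" "e \<noteq> 0" "e < n" using w' y unfolding e_def by (auto simp: elem_def)
        have s2: "swp n u v e = sw u v e" using e by (simp add: swp_def)
        have lhs: "elem n (sw u v x) (sw u v y) w = (if w = sw u v x then sw u v y else w)" using False wn by (simp add: elem_def)
        have "sw u v e = (if w = sw u v x then sw u v y else w)"
          unfolding e_def w'_def by (simp add: swinv sweq[of w x])
        then show ?thesis using lhs s2 e w' wn by (simp add: tcomp_apply)
      qed
    qed
  qed
  show ?thesis unfolding eq using G swp_G u v by (metis gen_semigroup.comp)
qed

lemma c_elem: "W_letter n Lc = elem n (n-2) 1"
proof
  fix x show "W_letter n Lc x = elem n (n-2) 1 x" using n4 by (auto simp: W_letter_def elem_def)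
qed

lemma d_elem: "W_letter n Ld = elem n 1 (n-1)"
proof
  fix x show "W_letter n Ld x = elem n 1 (n-1) x" using n4 by (auto simp: W_letter_def elem_def)
qed

lemma elem_z_G: "1 \<le> q \<Longrightarrow> q \<le> n-2 \<Longrightarrow> elem n q (n-1) \<in> GG"
proof -
  assume q: "1 \<le> q" "q \<le> n-2"
  have dG: "elem n 1 (n-1) \<in> GG" using d_elem by (metis gen_semigroup.gen rangeI)
  have s: "sw 1 q 1 = q" "sw 1 q (n-1) = n-1" using n4 q by (auto simp: sw_def)
  have "elem n (sw 1 q 1) (sw 1 q (n-1)) \<in> GG"
    by (rule elem_conj) (use dG n4 q in auto)
  then show ?thesis unfolding s .
qed

lemma elem_mid_G: "1 \<le> q \<Longrightarrow> q \<le> n-2 \<Longrightarrow> 1 \<le> r \<Longrightarrow> r \<le> n-2 \<Longrightarrow> q \<noteq> r \<Longrightarrow> elem n q r \<in> GG"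
proof -
  assume q: "1 \<le> q" "q \<le> n-2" and r: "1 \<le> r" "r \<le> n-2" and qr: "q \<noteq> r"
  have c: "elem n (n-2) 1 \<in> GG" using c_elem by (metis gen_semigroup.gen rangeI)
  define q' where "q' = (if r = 1 then n-2 else sw 1 r (n-2))"
  have q'm: "1 \<le> q'" "q' \<le> n-2" "q' \<noteq> r" using n4 r by (auto simp: q'_def sw_def)
  have e1: "elem n q' r \<in> GG"
  proof (cases "r = 1")
    case True then show ?thesis using c q'_def by simp
  next
    case False
    have "elem n (sw 1 r (n-2)) (sw 1 r 1) \<in> GG"
      by (rule elem_conj) (use c n4 r in auto)
    moreover have "sw 1 r 1 = r" by (simp add: sw_def)
    ultimately show ?thesis using False by (simp add: q'_def)
  qed
  have "elem n (sw q' q q') (sw q' q r) \<in> GG"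
    by (rule elem_conj) (use e1 n4 r q q'm in auto)
  moreover have "sw q' q q' = q" "sw q' q r = r" using q'm qr by (auto simp: sw_def)
  ultimately show ?thesis by simp
qed

lemma trQ_D: "f \<in> trQ n \<Longrightarrow> x < n \<Longrightarrow> f x < n"
  "f \<in> trQ n \<Longrightarrow> \<not> x < n \<Longrightarrow> f x = undefined"
  by (auto simp: trQ_def PiE_def extensional_def Pi_def)

lemma trQ_I: "(\<And>x. x < n \<Longrightarrow> f x < n) \<Longrightarrow> (\<And>x. \<not> x < n \<Longrightarrow> f x = undefined) \<Longrightarrow> f \<in> trQ n"
  by (auto simp: trQ_def PiE_def extensional_def Pi_def)

lemma A_G_aux: "\<forall>f. f \<in> Aset n \<longrightarrow> card {q. 1\<le>q \<and> q\<le>n-2 \<and> f q \<noteq> q} = k \<longrightarrow> f \<in> GG"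
proof (induction k rule: less_induct)
  case (less k)
  show ?case
  proof (intro allI impI)
    fix f assume fA: "f \<in> Aset n" and ck: "card {q. 1\<le>q \<and> q\<le>n-2 \<and> f q \<noteq> q} = k"
    define NF where "NF = {q. 1\<le>q \<and> q\<le>n-2 \<and> f q \<noteq> q}"
    have finNF: "finite NF" unfolding NF_def by (rule finite_subset[of _ "{..n}"]) auto
    have fT: "f \<in> trQ n" and f0: "f 0 = n-1" and fz: "f (n-1) = n-1"
      and fm: "\<And>q. 1 \<le> q \<Longrightarrow> q \<le> n-2 \<Longrightarrow> f q \<noteq> 0" using fA by (auto simp: Aset_def)
    have flt: "\<And>x. x < n \<Longrightarrow> f x < n" using trQ_D(1)[OF fT] .
    have fund: "\<And>x. \<not> x < n \<Longrightarrow> f x = undefined" using trQ_D(2)[OF fT] .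
    show "f \<in> GG"
    proof (cases "NF = {}")
      case True
      have "f = rot n 0"
      proof
        fix x
        show "f x = rot n 0 x"
        proof (cases "x < n")
          case False then show ?thesis using fund by (simp add: rot_def)
        next
          case xn: True
          consider "x = 0" | "x = n-1" | "1 \<le> x \<and> x \<le> n-2" using xn by linarith
          then show ?thesis
          proof cases
            case 1 then show ?thesis using f0 rot_out by simp
          next
            case 2 then show ?thesis using fz rot_out by simp
          next
            case 3
            then have "f x = x" using True unfolding NF_def by auto
            then show ?thesis using 3 rot0_mid[of x] by simp
          qed
        qed
      qed
      then show ?thesis using rot_G by simp
    next
      case False
      show ?thesis
      proof (cases "\<exists>q\<in>NF. \<forall>x. 1 \<le> x \<and> x \<le> n-2 \<longrightarrow> f x \<noteq> q")
        case True
        then obtain q where qN: "q \<in> NF" and qi: "\<And>x. 1 \<le> x \<Longrightarrow> x \<le> n-2 \<Longrightarrow> f x \<noteq> q" by blast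
        have q: "1 \<le> q" "q \<le> n-2" "f q \<noteq> q" using qN NF_def by auto
        define g where "g = f(q := q)"
        have gA: "g \<in> Aset n"
          unfolding Aset_def g_def using fT f0 fz fm q n4
          by (auto intro!: trQ_I simp: flt fund)
        have "{x. 1\<le>x \<and> x\<le>n-2 \<and> g x \<noteq> x} = NF - {q}" unfolding NF_def g_def by auto
        then have "card {x. 1\<le>x \<and> x\<le>n-2 \<and> g x \<noteq> x} < k"
          using ck qN finNF NF_def by (metis card_Diff1_less)
        then have gG: "g \<in> GG" using less gA by blast
        have fq: "0 < f q" "f q < n" using fm q flt n4 by auto
        have eG: "elem n q (f q) \<in> GG"
        proof (cases "f q = n-1")
          case True then show ?thesis using elem_z_G q by simp
        next
          case False then show ?thesis using elem_mid_G q fq by simp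
        qed
        have "f = tcomp n g (elem n q (f q))"
        proof
          fix x show "f x = tcomp n g (elem n q (f q)) x"
          proof (cases "x < n")
            case False then show ?thesis using fund by (simp add: tcomp_apply)
          next
            case xn: True
            consider "x = 0" | "x = n-1" | "1 \<le> x \<and> x \<le> n-2" using xn by linarith
            then show ?thesis
            proof cases
              case 1 then show ?thesis using f0 q n4 by (auto simp: tcomp_apply g_def elem_def)
            next
              case 2 then show ?thesis using fz q n4 by (auto simp: tcomp_apply g_def elem_def)
            next
              case 3 then show ?thesis using qi[of x] fm[of x] flt[of x] q n4 xn
                by (auto simp: tcomp_apply g_def elem_def)
            qed
          qed
        qed
        then show ?thesis using gG eG by (metis gen_semigroup.comp)
      next
        case False
        define M where "M = {1..n-2}"
        have NFi: "\<And>q. q \<in> NF \<Longrightarrow> q \<in> f ` M" using False unfolding M_def by auto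
        have MfM: "M \<subseteq> f ` M"
        proof
          fix x assume x: "x \<in> M"
          show "x \<in> f ` M"
          proof (cases "x \<in> NF")
            case True then show ?thesis using NFi by blast
          next
            case False then have "f x = x" using x unfolding NF_def M_def by auto
            then show ?thesis using x by (metis imageI)
          qed
        qed
        have finM: "finite M" unfolding M_def by simp
        have cle: "card (f ` M) \<le> card M" using finM by (rule card_image_le)
        have noz: "\<And>x. x \<in> M \<Longrightarrow> f x \<noteq> n-1"
        proof
          fix x assume x: "x \<in> M" and fx: "f x = n-1"
          have "insert (n-1) M \<subseteq> f ` M" using MfM x fx by (metis image_eqI insert_subset)
          then have "card (insert (n-1) M) \<le> card (f ` M)" using finM by (simp add: card_mono)
          moreover have "n-1 \<notin> M" unfolding M_def using n4 by auto
          ultimately show False using cle finM by simp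
        qed
        have fMM: "f ` M \<subseteq> M"
        proof
          fix y assume "y \<in> f ` M"
          then obtain x where x: "x \<in> M" "y = f x" by blast
          then have "x < n" using n4 unfolding M_def by auto
          then show "y \<in> M" using x noz[OF x(1)] fm flt[of x] unfolding M_def by fastforce
        qed
        have "f ` M = M" using fMM MfM by blast
        then have injf: "inj_on f M" using finM by (simp add: eq_card_imp_inj_on)
        from \<open>NF \<noteq> {}\<close> obtain q where qN: "q \<in> NF" by blast
        define r where "r = f q"
        have q: "1 \<le> q" "q \<le> n-2" "r \<noteq> q" using qN NF_def r_def by auto
        have "q \<in> M" using q unfolding M_def by auto
        then have "r \<in> M" using fMM unfolding r_def by blast
        then have r: "1 \<le> r" "r \<le> n-2" unfolding M_def by auto
        define g where "g = restrict (\<lambda>x. sw q r (f x)) {..<n}"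
        have gA: "g \<in> Aset n"
          unfolding Aset_def g_def using f0 fz fm q r n4 flt
          by (auto intro!: trQ_I simp: sw_def)
        have sub: "{x. 1\<le>x \<and> x\<le>n-2 \<and> g x \<noteq> x} \<subseteq> NF - {q}"
        proof
          fix x assume x: "x \<in> {x. 1\<le>x \<and> x\<le>n-2 \<and> g x \<noteq> x}"
          then have xn: "x < n" using n4 by auto
          have "x \<noteq> q" using x q xn by (auto simp: g_def sw_def r_def)
          moreover have "f x \<noteq> x"
          proof
            assume fx: "f x = x"
            have "x \<noteq> r"
            proof
              assume "x = r"
              then have "f x = f q" using fx r_def by simp
              then have "x = q" using injf x q unfolding M_def inj_on_def by auto
              then show False using q \<open>x = r\<close> by simp
            qed
            then show False using x fx xn \<open>x \<noteq> q\<close> by (auto simp: g_def sw_def)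
          qed
          ultimately show "x \<in> NF - {q}" using x unfolding NF_def by auto
        qed
        have "card {x. 1\<le>x \<and> x\<le>n-2 \<and> g x \<noteq> x} < k"
          using card_mono[OF _ sub] finNF qN ck NF_def card_Diff1_less
          by (metis (no_types, lifting) finite_Diff le_less_trans)
        then have gG: "g \<in> GG" using less gA by blast
        have sG: "swp n q r \<in> GG" using swp_G q r by simp
        have "f = tcomp n g (swp n q r)"
        proof
          fix x show "f x = tcomp n g (swp n q r) x"
          proof (cases "x < n")
            case False then show ?thesis using fund by (simp add: tcomp_apply)
          next
            case xn: True
            have "f x \<noteq> 0"
            proof (cases "x = 0 \<or> x = n-1")
              case True then show ?thesis using f0 fz n4 by auto
            next
              case False then show ?thesis using fm xn by auto
            qed
            then show ?thesis using xn flt[of x] q r by (auto simp: tcomp_apply g_def swp_def sw_def)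
          qed
        qed
        then show ?thesis using gG sG by (metis gen_semigroup.comp)
      qed
    qed
  qed
qed

lemma A_G: "f \<in> Aset n \<Longrightarrow> f \<in> GG"
  using A_G_aux by blast

lemma B_G: "t \<in> Bset n \<Longrightarrow> t \<in> GG"
proof -
  assume tB: "t \<in> Bset n"
  have tT: "t \<in> trQ n" and p: "1 \<le> t 0" "t 0 \<le> n-2" and tz: "\<And>q. 1 \<le> q \<Longrightarrow> q \<le> n-1 \<Longrightarrow> t q = n-1"
    using tB by (auto simp: Bset_def)
  have eG: "W_letter n Le \<in> GG" by (metis gen_semigroup.gen rangeI)
  have "t = tcomp n (W_letter n Le) (rot n (t 0 - 1))"
  proof
    fix x show "t x = tcomp n (W_letter n Le) (rot n (t 0 - 1)) x"
    proof (cases "x < n")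
      case False then show ?thesis using trQ_D(2)[OF tT] by (simp add: tcomp_apply)
    next
      case xn: True
      show ?thesis
      proof (cases "x = 0")
        case True
        have "rot n (t 0 - 1) 1 = t 0" using rot_mid[of 1 "t 0 - 1"] p n4 by simp
        then show ?thesis using True n4 by (simp add: tcomp_apply W_letter_def)
      next
        case False
        have "W_letter n Le x = n-1" using xn False by (simp add: W_letter_def)
        moreover have "t x = n-1" using tz[of x] False xn by simp
        ultimately show ?thesis using xn rot_out by (simp add: tcomp_apply)
      qed
    qed
  qed
  then show ?thesis using eG rot_G by (metis gen_semigroup.comp)
qed

lemma pow_fix: "t (n-1) = n-1 \<Longrightarrow> (t ^^ k) (n-1) = n-1"
  by (induction k) auto

lemma W_eq: "W_sf n = Aset n \<union> Bset n"
proof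
  show "W_sf n \<subseteq> Aset n \<union> Bset n"
  proof
    fix t assume tW: "t \<in> W_sf n"
    have tT: "t \<in> trQ n" and n0: "0 \<notin> t ` {..<n}" and tz: "t (n-1) = n-1"
      and alt: "t 0 = n-1 \<or> (\<forall>q. 1 \<le> q \<and> q \<le> n-2 \<longrightarrow> t q = n-1)"
      using tW by (auto simp: W_sf_def B_sf_def)
    have nz: "\<And>x. x < n \<Longrightarrow> t x \<noteq> 0" using n0 by (metis image_eqI lessThan_iff)
    show "t \<in> Aset n \<union> Bset n"
    proof (cases "t 0 = n-1")
      case True
      then have "t \<in> Aset n" unfolding Aset_def using tT tz nz n4 by auto
      then show ?thesis by simp
    next
      case False
      then have mz: "\<And>q. 1 \<le> q \<Longrightarrow> q \<le> n-2 \<Longrightarrow> t q = n-1" using alt by auto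
      have "t 0 < n" "t 0 \<noteq> 0" using trQ_D(1)[OF tT, of 0] nz[of 0] n4 by auto
      moreover have "\<And>q. 1 \<le> q \<Longrightarrow> q \<le> n-1 \<Longrightarrow> t q = n-1"
      proof -
        fix q assume q: "1 \<le> q" "q \<le> n-1"
        show "t q = n-1"
        proof (cases "q = n-1")
          case True then show ?thesis using tz by simp
        next
          case False then show ?thesis using mz q by simp
        qed
      qed
      ultimately have "t \<in> Bset n" unfolding Bset_def using tT False by auto
      then show ?thesis by simp
    qed
  qed
next
  show "Aset n \<union> Bset n \<subseteq> W_sf n"
  proof
    fix t assume t: "t \<in> Aset n \<union> Bset n"
    then have tT: "t \<in> trQ n" by (auto simp: Aset_def Bset_def)
    show "t \<in> W_sf n"
    proof (cases "t \<in> Aset n")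
      case True
      have t0: "t 0 = n-1" and tz: "t (n-1) = n-1" and tm: "\<And>q. 1 \<le> q \<Longrightarrow> q \<le> n-2 \<Longrightarrow> t q \<noteq> 0"
        using True by (auto simp: Aset_def)
      have n0: "0 \<notin> t ` {..<n}"
      proof
        assume "0 \<in> t ` {..<n}"
        then obtain x where x: "x < n" "t x = 0" by auto
        consider "x = 0" | "x = n-1" | "1 \<le> x \<and> x \<le> n-2" using x by linarith
        then show False using x t0 tz tm n4 by cases auto
      qed
      have "\<And>j. (t ^^ Suc j) 0 = n-1"
      proof -
        fix j show "(t ^^ Suc j) 0 = n-1" using pow_fix[of t, OF tz, of j] t0 by (simp add: funpow_Suc_right del: funpow.simps)
      qed
      then have "\<forall>j\<ge>1. (t ^^ j) 0 = n-1" by (metis Suc_le_D One_nat_def)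
      then show ?thesis unfolding W_sf_def B_sf_def using tT n0 tz t0 by auto
    next
      case False
      then have tB: "t \<in> Bset n" using t by simp
      have p: "1 \<le> t 0" "t 0 \<le> n-2" and tz: "\<And>q. 1 \<le> q \<Longrightarrow> q \<le> n-1 \<Longrightarrow> t q = n-1"
        using tB by (auto simp: Bset_def)
      have tzz: "t (n-1) = n-1" using tz n4 by simp
      have n0: "0 \<notin> t ` {..<n}"
      proof
        assume "0 \<in> t ` {..<n}"
        then obtain x where x: "x < n" "t x = 0" by auto
        show False
        proof (cases "x = 0")
          case True then show False using p x by simp
        next
          case False
          then have "1 \<le> x" "x \<le> n-1" using x by auto
          then show False using tz[of x] x n4 by simp
        qed
      qed
      have tp: "t (t 0) = n-1" using tz p n4 by simp
      have pw: "\<forall>j\<ge>1. (t ^^ j) 0 = n-1 \<or> (\<forall>q. 0 < q \<and> q < n-1 \<longrightarrow> (t ^^ j) 0 \<noteq> (t ^^ j) q)"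
      proof (intro allI impI)
        fix j :: nat assume "1 \<le> j"
        then consider "j = 1" | k where "j = Suc (Suc k)" by (cases j; cases "j - 1") auto
        then show "(t ^^ j) 0 = n-1 \<or> (\<forall>q. 0 < q \<and> q < n-1 \<longrightarrow> (t ^^ j) 0 \<noteq> (t ^^ j) q)"
        proof cases
          case 1 then show ?thesis using tz p n4 by auto
        next
          case (2 k)
          have "(t ^^ j) 0 = (t ^^ k) (t (t 0))" unfolding 2 by (simp add: funpow_Suc_right del: funpow.simps)
          then show ?thesis using tp pow_fix[of t, OF tzz] by simp
        qed
      qed
      show ?thesis unfolding W_sf_def B_sf_def using tT n0 tzz pw tz n4 by auto
    qed
  qed
qed

lemma AB_closed: "s \<in> Aset n \<union> Bset n \<Longrightarrow> t \<in> Aset n \<union> Bset n \<Longrightarrow> tcomp n s t \<in> Aset n \<union> Bset n"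
proof -
  assume s: "s \<in> Aset n \<union> Bset n" and t: "t \<in> Aset n \<union> Bset n"
  have sT: "s \<in> trQ n" and tT: "t \<in> trQ n" using s t by (auto simp: Aset_def Bset_def)
  have tz: "t (n-1) = n-1" using t n4 by (auto simp: Aset_def Bset_def)
  have sz: "s (n-1) = n-1" using s n4 by (auto simp: Aset_def Bset_def)
  have cT: "tcomp n s t \<in> trQ n"
    by (rule trQ_I) (auto simp: tcomp_apply trQ_D[OF sT] trQ_D[OF tT])
  have tnz: "\<And>x. 1 \<le> x \<Longrightarrow> x < n \<Longrightarrow> t x \<noteq> 0"
  proof -
    fix x assume x: "1 \<le> x" "x < n"
    show "t x \<noteq> 0"
    proof (cases "x = n-1")
      case True then show ?thesis using tz n4 by simp
    next
      case False then show ?thesis using t x n4 by (auto simp: Aset_def Bset_def)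
    qed
  qed
  show ?thesis
  proof (cases "s \<in> Aset n")
    case True
    have s0: "s 0 = n-1" and sm: "\<And>q. 1 \<le> q \<Longrightarrow> q \<le> n-2 \<Longrightarrow> s q \<noteq> 0" using True by (auto simp: Aset_def)
    have "\<And>q. 1 \<le> q \<Longrightarrow> q \<le> n-2 \<Longrightarrow> t (s q) \<noteq> 0"
    proof -
      fix q assume q: "1 \<le> q" "q \<le> n-2"
      have "s q < n" using trQ_D(1)[OF sT] q n4 by simp
      then show "t (s q) \<noteq> 0" using tnz sm[OF q] by simp
    qed
    then have "tcomp n s t \<in> Aset n" unfolding Aset_def using cT s0 sz tz n4 by (auto simp: tcomp_apply)
    then show ?thesis by simp
  next
    case False
    then have sB: "s \<in> Bset n" using s by simp
    have p: "1 \<le> s 0" "s 0 \<le> n-2" and sm: "\<And>q. 1 \<le> q \<Longrightarrow> q \<le> n-1 \<Longrightarrow> s q = n-1"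
      using sB by (auto simp: Bset_def)
    have tp: "t (s 0) \<noteq> 0" "t (s 0) < n" using tnz p trQ_D(1)[OF tT, of "s 0"] n4 by auto
    have cm: "\<And>q. 1 \<le> q \<Longrightarrow> q \<le> n-1 \<Longrightarrow> tcomp n s t q = n-1"
    proof -
      fix q assume q: "1 \<le> q" "q \<le> n-1"
      then have "q < n" using n4 by linarith
      then show "tcomp n s t q = n-1" using sm[OF q] tz by (simp add: tcomp_apply)
    qed
    have c0: "tcomp n s t 0 = t (s 0)" using n4 by (simp add: tcomp_apply)
    have cz: "tcomp n s t (n-1) = n-1" using cm[of "n-1"] n4 by simp
    have cmid: "\<forall>q. 1 \<le> q \<and> q \<le> n-2 \<longrightarrow> tcomp n s t q \<noteq> 0"
    proof (intro allI impI)
      fix q assume q: "1 \<le> q \<and> q \<le> n-2"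
      then have "q \<le> n-1" by arith
      then have "tcomp n s t q = n-1" using cm q by simp
      then show "tcomp n s t q \<noteq> 0" using n4 by simp
    qed
    have cmid2: "\<forall>q. 1 \<le> q \<and> q \<le> n-1 \<longrightarrow> tcomp n s t q = n-1" using cm by blast
    show ?thesis
    proof (cases "t (s 0) = n-1")
      case True
      then have "tcomp n s t \<in> Aset n" unfolding Aset_def using cT c0 cz cmid by simp
      then show ?thesis by simp
    next
      case False
      then have "1 \<le> tcomp n s t 0" "tcomp n s t 0 \<le> n-2" using c0 tp by auto
      then have "tcomp n s t \<in> Bset n" unfolding Bset_def using cT cmid2 by simp
      then show ?thesis by simp
    qed
  qed
qed

lemma letters_AB: "W_letter n x \<in> Aset n \<union> Bset n"
proof (cases x)
  case La
  have "W_letter n x \<in> Aset n" unfolding Aset_def La using n4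
    by (auto intro!: trQ_I simp: W_letter_def)
  then show ?thesis by simp
next
  case Lb
  have "W_letter n x \<in> Aset n" unfolding Aset_def Lb using n4
    by (auto intro!: trQ_I simp: W_letter_def)
  then show ?thesis by simp
next
  case Lc
  have "W_letter n x \<in> Aset n" unfolding Aset_def Lc using n4
    by (auto intro!: trQ_I simp: W_letter_def)
  then show ?thesis by simp
next
  case Ld
  have "W_letter n x \<in> Aset n" unfolding Aset_def Ld using n4
    by (auto intro!: trQ_I simp: W_letter_def)
  then show ?thesis by simp
next
  case Le
  have "W_letter n x \<in> Bset n" unfolding Bset_def Le using n4
    by (auto intro!: trQ_I simp: W_letter_def)
  then show ?thesis by simp
qed

lemma gen_eq: "GG = W_sf n"
proof
  show "GG \<subseteq> W_sf n"
  proof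
    fix t assume "t \<in> GG"
    then have "t \<in> Aset n \<union> Bset n"
    proof (induction rule: gen_semigroup.induct)
      case (gen t) then show ?case using letters_AB by blast
    next
      case (comp s t) then show ?case using AB_closed by blast
    qed
    then show "t \<in> W_sf n" using W_eq by simp
  qed
next
  show "W_sf n \<subseteq> GG" using W_eq A_G B_G by auto
qed

lemma card_A: "card (Aset n) = (n-1)^(n-2)"
proof -
  define M where "M = {1..n-2}"
  define ext where "ext = (\<lambda>g::nat\<Rightarrow>nat. restrict (\<lambda>x. if x \<in> M then g x else n-1) {..<n})"
  have img: "Aset n = ext ` (M \<rightarrow>\<^sub>E {1..n-1})"
  proof
    show "Aset n \<subseteq> ext ` (M \<rightarrow>\<^sub>E {1..n-1})"
    proof
      fix f assume fA: "f \<in> Aset n"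
      have fT: "f \<in> trQ n" and f0: "f 0 = n-1" and fz: "f (n-1) = n-1"
        and fm: "\<And>q. 1 \<le> q \<Longrightarrow> q \<le> n-2 \<Longrightarrow> f q \<noteq> 0" using fA by (auto simp: Aset_def)
      have "f = ext (restrict f M)"
      proof
        fix x show "f x = ext (restrict f M) x"
        proof (cases "x < n")
          case False then show ?thesis using trQ_D(2)[OF fT] by (simp add: ext_def)
        next
          case True
          consider "x = 0" | "x = n-1" | "1 \<le> x \<and> x \<le> n-2" using True by linarith
          then show ?thesis using True f0 fz n4 by cases (auto simp: ext_def M_def)
        qed
      qed
      moreover have "restrict f M \<in> M \<rightarrow>\<^sub>E {1..n-1}"
      proof -
        have "\<And>x. x \<in> M \<Longrightarrow> f x \<in> {1..n-1}"
        proof -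
          fix x assume x: "x \<in> M"
          then have "x < n" using n4 unfolding M_def by auto
          then have "f x < n" using trQ_D(1)[OF fT] by simp
          moreover have "f x \<noteq> 0" using fm x unfolding M_def by auto
          ultimately show "f x \<in> {1..n-1}" by auto
        qed
        then show ?thesis by auto
      qed
      ultimately show "f \<in> ext ` (M \<rightarrow>\<^sub>E {1..n-1})" by blast
    qed
  next
    show "ext ` (M \<rightarrow>\<^sub>E {1..n-1}) \<subseteq> Aset n"
    proof
      fix f assume "f \<in> ext ` (M \<rightarrow>\<^sub>E {1..n-1})"
      then obtain g where g: "g \<in> M \<rightarrow>\<^sub>E {1..n-1}" "f = ext g" by blast
      have gv: "\<And>x. x \<in> M \<Longrightarrow> 1 \<le> g x \<and> g x \<le> n-1" using g(1) by auto
      have gl: "\<And>x. x \<in> M \<Longrightarrow> g x < n \<and> g x \<noteq> 0" using gv n4 by fastforce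
      have T: "ext g \<in> trQ n"
      proof (rule trQ_I)
        fix x assume "x < n" then show "ext g x < n" using gl n4 by (auto simp: ext_def)
      next
        fix x assume "\<not> x < n" then show "ext g x = undefined" by (simp add: ext_def)
      qed
      have "ext g 0 = n-1" "ext g (n-1) = n-1" using n4 by (auto simp: ext_def M_def)
      moreover have "\<And>q. 1 \<le> q \<Longrightarrow> q \<le> n-2 \<Longrightarrow> ext g q \<noteq> 0"
      proof -
        fix q assume q: "1 \<le> q" "q \<le> n-2"
        then have "q \<in> M" "q < n" using n4 unfolding M_def by auto
        then show "ext g q \<noteq> 0" using gl by (simp add: ext_def)
      qed
      ultimately show "f \<in> Aset n" unfolding Aset_def g(2) using T by simp
    qed
  qed
  have inj: "inj_on ext (M \<rightarrow>\<^sub>E {1..n-1})"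
  proof (rule inj_onI)
    fix g h assume g: "g \<in> M \<rightarrow>\<^sub>E {1..n-1}" and h: "h \<in> M \<rightarrow>\<^sub>E {1..n-1}" and e: "ext g = ext h"
    show "g = h"
    proof
      fix x show "g x = h x"
      proof (cases "x \<in> M")
        case True
        then have "x < n" using n4 unfolding M_def by auto
        then have "ext g x = g x" "ext h x = h x" using True by (auto simp: ext_def)
        then show ?thesis using e by metis
      next
        case False then show ?thesis using g h by (simp add: PiE_def extensional_def)
      qed
    qed
  qed
  have "card (Aset n) = card (M \<rightarrow>\<^sub>E {1..n-1})" using img inj by (simp add: card_image)
  also have "\<dots> = (n-1)^(n-2)" by (simp add: card_PiE M_def)
  finally show ?thesis .
qed

lemma card_B: "card (Bset n) = n-2"
proof -
  define h where "h = (\<lambda>p. restrict (\<lambda>x. if x = 0 then p else n-1) {..<n})"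
  have img: "Bset n = h ` {1..n-2}"
  proof
    show "Bset n \<subseteq> h ` {1..n-2}"
    proof
      fix t assume tB: "t \<in> Bset n"
      have tT: "t \<in> trQ n" and p: "1 \<le> t 0" "t 0 \<le> n-2" and tz: "\<And>q. 1 \<le> q \<Longrightarrow> q \<le> n-1 \<Longrightarrow> t q = n-1"
        using tB by (auto simp: Bset_def)
      have "t = h (t 0)"
      proof
        fix x show "t x = h (t 0) x"
          using trQ_D(2)[OF tT, of x] tz[of x] by (cases "x < n") (auto simp: h_def)
      qed
      then show "t \<in> h ` {1..n-2}" using p by auto
    qed
  next
    show "h ` {1..n-2} \<subseteq> Bset n"
      unfolding Bset_def h_def using n4 by (auto intro!: trQ_I)
  qed
  have "inj_on h {1..n-2}"
  proof (rule inj_onI)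
    fix p q assume "h p = h q"
    then have "h p 0 = h q 0" by simp
    then show "p = q" using n4 by (simp add: h_def)
  qed
  then show ?thesis using img by (simp add: card_image)
qed

lemma dl: "q < n \<Longrightarrow> W_delta n q x < n \<and> W_delta n q x \<noteq> 0"
  using n4 by (cases x) (auto simp: W_delta_def W_letter_def)

lemma dz: "W_delta n (n-1) x = n-1"
  using n4 by (cases x) (auto simp: W_delta_def W_letter_def)

lemma sink: "foldl (W_delta n) (n-1) w = n-1"
proof (induction w)
  case Nil then show ?case by simp
next
  case (Cons a w)
  have "W_delta n (n-1) a = n-1" by (rule dz)
  then show ?case using Cons by simp
qed

lemma foldl_lt: "q < n \<Longrightarrow> foldl (W_delta n) q w < n"
  by (induction w arbitrary: q) (auto simp: dl)

lemma foldl_nz: "q < n \<Longrightarrow> w \<noteq> [] \<Longrightarrow> foldl (W_delta n) q w \<noteq> 0"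
proof (induction w arbitrary: q)
  case Nil then show ?case by simp
next
  case (Cons x w)
  show ?case
  proof (cases "w = []")
    case True then show ?thesis using dl Cons by simp
  next
    case False then show ?thesis using Cons dl by simp
  qed
qed

lemma rep: "q < n \<Longrightarrow> foldl (W_delta n) q (replicate (Suc k) La) = rot n (Suc k) q"
proof (induction k)
  case 0 then show ?case using aLa by (simp add: W_delta_def)
next
  case (Suc k)
  have e: "replicate (Suc (Suc k)) La = replicate (Suc k) La @ [La]" by (metis replicate_append_same replicate_Suc)
  have "foldl (W_delta n) q (replicate (Suc (Suc k)) La) = foldl (W_delta n) q (replicate (Suc k) La @ [La])"
    by (simp only: e)
  also have "\<dots> = W_delta n (foldl (W_delta n) q (replicate (Suc k) La)) La"
    by (simp only: foldl_append foldl.simps)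
  also have "\<dots> = W_letter n La (rot n (Suc k) q)"
    by (subst Suc.IH[OF Suc.prems]) (simp add: W_delta_def)
  finally have "foldl (W_delta n) q (replicate (Suc (Suc k)) La) = W_letter n La (rot n (Suc k) q)" .
  then show ?case using rot_Suc[of "Suc k"] Suc by (simp add: tcomp_apply)
qed

lemma modlem: "i < m \<Longrightarrow> j < m \<Longrightarrow> ((i + (m - j)) mod (m::nat) = 0) = (i = j)"
proof (cases "j \<le> i")
  case True
  assume im: "i < m" "j < m"
  then have e: "i + (m - j) = (i - j) + m" using True by simp
  have "(i + (m - j)) mod m = ((i-j) + m) mod m" by (simp only: e)
  also have "\<dots> = (i-j) mod m" by (rule mod_add_self2)
  also have "\<dots> = i - j" using im by simp
  finally show ?thesis using True by simp
next
  case False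
  assume im: "i < m" "j < m"
  then have "0 < i + (m - j)" "i + (m - j) < m" using False by simp_all
  then show ?thesis using False im by simp
qed

definition wd :: "nat \<Rightarrow> letter list" where
  "wd p = (if p = 0 then [] else if p = n-1 then [La] else Le # replicate (p-1) La)"
definition sep :: "nat \<Rightarrow> letter list" where
  "sep p = (if p = 0 then [Le] else replicate (n-1-p) La)"

lemma reach: "p < n \<Longrightarrow> foldl (W_delta n) 0 (wd p) = p"
proof -
  assume p: "p < n"
  consider "p = 0" | "p = n-1" | "p = 1" | "2 \<le> p \<and> p \<le> n-2" using p n4 by linarith
  then show ?thesis
  proof cases
    case 1 then show ?thesis by (simp add: wd_def)
  next
    case 2 then show ?thesis using n4 by (simp add: wd_def W_delta_def W_letter_def)
  next
    case 3 then show ?thesis using n4 by (simp add: wd_def W_delta_def W_letter_def)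
  next
    case 4
    have e: "W_delta n 0 Le = 1" using n4 by (simp add: W_delta_def W_letter_def)
    have pp: "p - 1 = Suc (p - 2)" using 4 by arith
    have "p \<noteq> 0" "p \<noteq> n-1" using 4 n4 by arith+
    then have w: "wd p = Le # replicate (Suc (p-2)) La" unfolding wd_def pp by simp
    have "1 < n" using n4 by simp
    then have "foldl (W_delta n) 0 (wd p) = rot n (Suc (p-2)) 1"
      unfolding w using e rep[of 1 "p-2"] by simp
    also have "\<dots> = (1 - 1 + Suc (p-2)) mod (n-2) + 1" using rot_mid[of 1 "Suc (p-2)"] 4 n4 by simp
    also have "\<dots> = p"
    proof -
      have "Suc (p-2) < n - 2" using 4 by arith
      then have "Suc (p-2) mod (n-2) = Suc (p-2)" by simp
      then show ?thesis using 4 by simp arith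
    qed
    finally show ?thesis .
  qed
qed

lemma sep_acc: "q < n \<Longrightarrow> p < n-1 \<Longrightarrow> (foldl (W_delta n) q (sep p) = 1) = (q = p)"
proof -
  assume q: "q < n" and p: "p < n-1"
  show ?thesis
  proof (cases "p = 0")
    case True
    have "n - 1 \<noteq> 1" using n4 by arith
    then show ?thesis using q True n4 by (simp add: sep_def W_delta_def W_letter_def)
  next
    case False
    have k: "n-1-p = Suc (n-2-p)" using False p by simp
    have f: "foldl (W_delta n) q (sep p) = rot n (n-1-p) q"
      using False rep[OF q, of "n-2-p"] k by (simp add: sep_def)
    consider "q = 0" | "q = n-1" | "1 \<le> q \<and> q \<le> n-2" using q by linarith
    then show ?thesis
    proof cases
      case 1
      have "n - 1 \<noteq> 1" using n4 by arith
      then show ?thesis using f False 1 rot_out(1) by simp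
    next
      case 2
      have "n - 1 \<noteq> 1" using n4 by arith
      then show ?thesis using f p 2 rot_out(2) by simp
    next
      case 3
      have "rot n (n-1-p) q = (q - 1 + (n-1-p)) mod (n-2) + 1" using rot_mid 3 by simp
      moreover have "q - 1 + (n-1-p) = (q-1) + ((n-2) - (p-1))" using 3 False p by simp
      moreover have "((q-1) + ((n-2) - (p-1))) mod (n-2) = 0 \<longleftrightarrow> q - 1 = p - 1"
      proof -
        have "q - 1 < n - 2" "p - 1 < n - 2" using 3 p False by arith+
        then show ?thesis by (rule modlem)
      qed
      moreover have "(q - 1 = p - 1) = (q = p)" using 3 False by arith
      ultimately show ?thesis using f by simp
    qed
  qed
qed

lemma suffix: "suffix_free (lang_of (W_delta n) 0 {1})"
  unfolding suffix_free_def lang_of_def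
proof (intro ballI impI)
  fix w u assume w: "w \<in> {w. foldl (W_delta n) 0 w \<in> {1}}" and u: "u \<in> {w. foldl (W_delta n) 0 w \<in> {1}}"
    and "\<exists>v. w = v @ u"
  then obtain v where v: "w = v @ u" by blast
  show "u = w"
  proof (rule ccontr)
    assume "u \<noteq> w"
    then have vne: "v \<noteq> []" using v by auto
    define s where "s = foldl (W_delta n) 0 v"
    have s: "s < n" "s \<noteq> 0" using foldl_lt foldl_nz vne n4 unfolding s_def by auto
    have ws: "foldl (W_delta n) s u = 1" using w v s_def by simp
    have u1: "foldl (W_delta n) 0 u = 1" using u by simp
    obtain x u' where xu: "u = x # u'" using u1 by (cases u) auto
    show False
    proof (cases "x = Le")
      case True
      have "W_delta n s Le = n-1" using s by (simp add: W_delta_def W_letter_def)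
      then show False using ws xu True sink n4 by simp
    next
      case False
      have "W_delta n 0 x = n-1" using False n4 by (cases x) (auto simp: W_delta_def W_letter_def)
      then show False using u1 xu sink n4 by simp
    qed
  qed
qed

lemma foldl_in: "(\<forall>q\<in>S. \<forall>x. d q x \<in> S) \<Longrightarrow> q \<in> S \<Longrightarrow> foldl d q w \<in> S"
  by (induction w arbitrary: q) auto

lemma minimal: "minimal_dfa {..<n} (W_delta n) 0 {1}"
  unfolding minimal_dfa_def
proof (intro conjI allI impI)
  show "is_dfa {..<n} (W_delta n) 0 {1}" unfolding is_dfa_def using n4 dl by auto
next
  fix S' d' q0' F'
  assume a: "is_dfa S' d' q0' F' \<and> lang_of d' q0' F' = lang_of (W_delta n) 0 {1}"
  have fin: "finite S'" and q0: "q0' \<in> S'" and cl: "\<forall>q\<in>S'. \<forall>x. d' q x \<in> S'"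
    using a by (auto simp: is_dfa_def)
  have L: "\<And>w. (foldl d' q0' w \<in> F') = (foldl (W_delta n) 0 w = 1)"
    using a unfolding lang_of_def by (metis (no_types, lifting) mem_Collect_eq singleton_iff)
  define phi where "phi = (\<lambda>p. foldl d' q0' (wd p))"
  have inj: "inj_on phi {..<n}"
  proof (rule inj_onI)
    fix p p' assume p: "p \<in> {..<n}" and p': "p' \<in> {..<n}" and e: "phi p = phi p'"
    show "p = p'"
    proof (rule ccontr)
      assume ne: "p \<noteq> p'"
      define s where "s = (if p \<noteq> n-1 then p else p')"
      have s: "s < n-1" using p p' ne unfolding s_def by auto
      have "foldl d' q0' (wd p @ sep s) = foldl d' q0' (wd p' @ sep s)"
        using e unfolding phi_def by simp
      then have "(foldl (W_delta n) 0 (wd p @ sep s) = 1) = (foldl (W_delta n) 0 (wd p' @ sep s) = 1)"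
        using L by metis
      then have "(p = s) = (p' = s)" using reach sep_acc p p' s by simp
      then show False using ne s_def by (auto split: if_splits)
    qed
  qed
  have "phi ` {..<n} \<subseteq> S'" unfolding phi_def using foldl_in[OF cl q0] by auto
  then have "card {..<n} \<le> card S'" using card_inj_on_le[OF inj _ fin] by simp
  then show "card {..<n} \<le> card S'" .
qed

end

theorem proposition2:
  fixes n :: nat
  assumes "n \<ge> 4"
  shows "minimal_dfa {..<n} (W_delta n) 0 {1}
    \<and> suffix_free (lang_of (W_delta n) 0 {1})
    \<and> gen_semigroup n (range (W_letter n)) = W_sf n
    \<and> card (W_sf n) = (n-1)^(n-2) + n - 2
    \<and> {t \<in> trQ n. t 0 = n-1 \<and> t (n-1) = n-1 \<and> (\<forall>q. 1 \<le> q \<and> q \<le> n-2 \<longrightarrow> t q \<noteq> 0)} \<subseteq> W_sf n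
    \<and> card {t \<in> trQ n. t 0 = n-1 \<and> t (n-1) = n-1 \<and> (\<forall>q. 1 \<le> q \<and> q \<le> n-2 \<longrightarrow> t q \<noteq> 0)} = (n-1)^(n-2)
    \<and> {t \<in> trQ n. 1 \<le> t 0 \<and> t 0 \<le> n-2 \<and> (\<forall>q. 1 \<le> q \<and> q \<le> n-1 \<longrightarrow> t q = n-1)} \<subseteq> W_sf n
    \<and> card {t \<in> trQ n. 1 \<le> t 0 \<and> t 0 \<le> n-2 \<and> (\<forall>q. 1 \<le> q \<and> q \<le> n-1 \<longrightarrow> t q = n-1)} = n-2"
proof -
  have A: "{t \<in> trQ n. t 0 = n-1 \<and> t (n-1) = n-1 \<and> (\<forall>q. 1 \<le> q \<and> q \<le> n-2 \<longrightarrow> t q \<noteq> 0)} = Aset n"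
    by (simp add: Aset_def)
  have B: "{t \<in> trQ n. 1 \<le> t 0 \<and> t 0 \<le> n-2 \<and> (\<forall>q. 1 \<le> q \<and> q \<le> n-1 \<longrightarrow> t q = n-1)} = Bset n"
    by (simp add: Bset_def)
  have disj: "Aset n \<inter> Bset n = {}" using assms by (auto simp: Aset_def Bset_def)
  have finA: "finite (Aset n)" using card_A[OF assms] assms
    by (intro card_ge_0_finite) simp
  have finB: "finite (Bset n)" using card_B[OF assms] assms by (intro card_ge_0_finite) simp
  have cW: "card (W_sf n) = (n-1)^(n-2) + n - 2"
    using W_eq[OF assms] card_Un_disjoint[OF finA finB disj] card_A[OF assms] card_B[OF assms] assms by simp
  show ?thesis unfolding A B
    using minimal[OF assms] suffix[OF assms] gen_eq[OF assms] cW W_eq[OF assms] card_A[OF assms] card_B[OF assms]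
    by simp
qed

end
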